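(* Let $(M,g)$ be a semi-Riemannian manifold with Levi-Civita connection $\overset{\circ}{\nabla}$ and let $\pi$ be a one-form on $M$. Define the $(1,2)$-tensor field $$U(\omega,X,Y)=\frac12\left(X^\flat\big(\pi(\omega^\sharp)Y-\pi(Y)\omega^\sharp\big)+Y^\flat\big(\pi(\omega^\sharp)X-\pi(X)\omega^\sharp\big)\right)$$ and $\nabla_XY=\overset{\circ}{\nabla}_XY+U(-,X,Y)$. Then $(\nabla,U)$ is a Schrödinger connection (called the Yano-Schrödinger connection).
   Context: $X^\flat=g(X,-)$ (so $X^\flat(V)=g(X,V)$), $\omega^\sharp=g^{-1}(\omega,-)$. For a $(1,2)$-tensor field $U$, $U(-,X,Y)$ denotes the vector field with $\omega(U(-,X,Y))=U(\omega,X,Y)$. A Schrödinger connection is an affine connection $\nabla_XY=\overset{\circ}{\nabla}_XY+U(-,X,Y)$ where $U$ satisfies, for all vector fields $X,Y$ and one-forms $\omega$: (a) $U(\omega,X,Y)=U(\omega,Y,X)$, and (b) $U(\omega,X,Y)+U(\omega,Y,X)+U(X^\flat,\omega^\sharp,Y)+U(X^\flat,Y,\omega^\sharp)+U(Y^\flat,\omega^\sharp,X)+U(Y^\flat,X,\omega^\sharp)=0$. *)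

theory Defs
  imports "HOL-Analysis.Analysis"
begin

text \<open>Pointwise (tangent-space) model.  At a point, the tangent space is
  real^'n, a one-form is a covector also represented in real^'n with pairing
  omega(V) = omega \<bullet> V.  The metric at the point is a symmetric invertible
  (nondegenerate, any signature) matrix G with g(X,Y) = X \<bullet> (G *v Y).\<close>

definition metric_at :: "real^'n^'n \<Rightarrow> bool" where
  "metric_at G \<longleftrightarrow> transpose G = G \<and> invertible G"

definition gmet :: "real^'n^'n \<Rightarrow> real^'n \<Rightarrow> real^'n \<Rightarrow> real" where
  "gmet G X Y = X \<bullet> (G *v Y)"

definition flat :: "real^'n^'n \<Rightarrow> real^'n \<Rightarrow> real^'n" where
  "flat G X = transpose G *v X"

definition sharp :: "real^'n^'n \<Rightarrow> real^'n \<Rightarrow> real^'n" where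
  "sharp G \<omega> = matrix_inv G *v \<omega>"

definition tensor12 :: "(real^'n \<Rightarrow> real^'n \<Rightarrow> real^'n \<Rightarrow> real) \<Rightarrow> bool" where
  "tensor12 U \<longleftrightarrow>
     (\<forall>X Y. linear (\<lambda>\<omega>. U \<omega> X Y)) \<and>
     (\<forall>\<omega> Y. linear (\<lambda>X. U \<omega> X Y)) \<and>
     (\<forall>\<omega> X. linear (\<lambda>Y. U \<omega> X Y))"

definition schroedinger_tensor ::
  "real^'n^'n \<Rightarrow> (real^'n \<Rightarrow> real^'n \<Rightarrow> real^'n \<Rightarrow> real) \<Rightarrow> bool" where
  "schroedinger_tensor G U \<longleftrightarrow>
     tensor12 U \<and>
     (\<forall>\<omega> X Y. U \<omega> X Y = U \<omega> Y X) \<and>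
     (\<forall>\<omega> X Y. U \<omega> X Y + U \<omega> Y X
        + U (flat G X) (sharp G \<omega>) Y + U (flat G X) Y (sharp G \<omega>)
        + U (flat G Y) (sharp G \<omega>) X + U (flat G Y) X (sharp G \<omega>) = 0)"

definition yano_U :: "real^'n^'n \<Rightarrow> real^'n \<Rightarrow> real^'n \<Rightarrow> real^'n \<Rightarrow> real^'n \<Rightarrow> real" where
  "yano_U G \<pi> \<omega> X Y =
     (1/2) * ( flat G X \<bullet> ((\<pi> \<bullet> sharp G \<omega>) *\<^sub>R Y - (\<pi> \<bullet> Y) *\<^sub>R sharp G \<omega>)
             + flat G Y \<bullet> ((\<pi> \<bullet> sharp G \<omega>) *\<^sub>R X - (\<pi> \<bullet> X) *\<^sub>R sharp G \<omega>))"

end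

theory Submission
  imports Defs
begin

lemma inv_right:
  fixes G :: "real^'n^'n"
  assumes "invertible G" shows "G ** matrix_inv G = mat 1"
  using assms unfolding invertible_def matrix_inv_def by (rule someI2_ex) auto

lemma inv_left:
  fixes G :: "real^'n^'n"
  assumes "invertible G" shows "matrix_inv G ** G = mat 1"
  using assms unfolding invertible_def matrix_inv_def by (rule someI2_ex) auto

lemma flat_inner: "flat G X \<bullet> V = X \<bullet> (G *v V)"
  unfolding flat_def by (simp add: dot_lmul_matrix)

lemma flat_sharp:
  assumes "metric_at G" shows "flat G X \<bullet> sharp G w = X \<bullet> w"
  using assms inv_right[of G]
  by (simp add: flat_inner sharp_def metric_at_def matrix_vector_mul_assoc)

lemma sharp_flat:
  assumes "metric_at G" shows "sharp G (flat G X) = X"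
  using assms inv_left[of G]
  by (simp add: flat_def sharp_def metric_at_def matrix_vector_mul_assoc del: transpose_matrix_vector)

lemma flat_sym:
  assumes "metric_at G" shows "flat G X \<bullet> Y = flat G Y \<bullet> X"
proof -
  have "flat G X \<bullet> Y = X \<bullet> (G *v Y)" by (rule flat_inner)
  also have "\<dots> = (G *v Y) \<bullet> X" by (rule inner_commute)
  also have "\<dots> = (transpose G *v Y) \<bullet> X" using assms by (simp add: metric_at_def del: transpose_matrix_vector)
  finally show ?thesis by (simp add: flat_def del: transpose_matrix_vector)
qed

lemma yano_simp:
  assumes "metric_at G"
  shows "yano_U G p w X Y = (p \<bullet> sharp G w) * (flat G X \<bullet> Y)
      - (1/2) * ((p \<bullet> Y) * (X \<bullet> w) + (p \<bullet> X) * (Y \<bullet> w))"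
  unfolding yano_U_def
  using flat_sharp[OF assms, of X w] flat_sharp[OF assms, of Y w] flat_sym[OF assms, of X Y]
  by (simp add: inner_diff_right algebra_simps)

lemma sharp_lin: "linear (sharp G)"
  unfolding sharp_def by (rule matrix_vector_mul_linear)

lemma flat_lin: "linear (flat G)"
  unfolding flat_def by (rule matrix_vector_mul_linear)

theorem mainTheorem6:
  fixes g :: "'m \<Rightarrow> real^'n^'n" and \<pi> :: "'m \<Rightarrow> real^'n"
  assumes "\<forall>p. metric_at (g p)"
  shows "\<forall>p. schroedinger_tensor (g p) (yano_U (g p) (\<pi> p))"
proof
  fix q
  define G where "G = g q"
  define p where "p = \<pi> q"
  have m: "metric_at G" using assms G_def by auto
  note ys = yano_simp[OF m]
  have sl: "sharp G (a + b) = sharp G a + sharp G b" "sharp G (c *\<^sub>R a) = c *\<^sub>R sharp G a" for a b c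
    using sharp_lin[of G] by (simp_all add: linear_add linear_scale)
  have fl: "flat G (a + b) = flat G a + flat G b" "flat G (c *\<^sub>R a) = c *\<^sub>R flat G a" for a b c
    using flat_lin[of G] by (simp_all add: linear_add linear_scale)
  have t: "tensor12 (yano_U G p)"
    unfolding tensor12_def ys
    by (intro conjI allI linearI) (simp_all add: sl fl inner_add_right inner_add_left algebra_simps)
  have s: "yano_U G p w X Y = yano_U G p w Y X" for w X Y
    unfolding ys using flat_sym[OF m, of X Y] by (simp add: algebra_simps)
  have b: "yano_U G p w X Y + yano_U G p w Y X
        + yano_U G p (flat G X) (sharp G w) Y + yano_U G p (flat G X) Y (sharp G w)
        + yano_U G p (flat G Y) (sharp G w) X + yano_U G p (flat G Y) X (sharp G w) = 0" for w X Y
    unfolding ys sharp_flat[OF m] flat_sharp[OF m]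
    using flat_sym[OF m, of X Y] flat_sym[OF m, of "sharp G w" Y] flat_sym[OF m, of "sharp G w" X]
      flat_sharp[OF m, of X w] flat_sharp[OF m, of Y w]
    by (simp add: inner_commute algebra_simps)
  show "schroedinger_tensor (g q) (yano_U (g q) (\<pi> q))"
    unfolding schroedinger_tensor_def G_def[symmetric] p_def[symmetric]
    using t s b by blast
qed

end
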